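(* Let $X$ be a set, $B=(B,+,0)$ a unitary magma, $(A,k,q,s,p)$ a retraction point from $X$ to $B$, and $\varphi(x,b,x',b')=q\big((k(x)+s(b))+(k(x')+s(b'))\big)$. Write $0$ also for $q(0)\in X$ and set $x+x'=\varphi(x,0,x',0)$, $\xi(b,x')=\varphi(0,b,x',0)$, $\rho_{b'}(x)=\varphi(x,0,0,b')$. 1. If $A=(A,+,0)$ is a monoid (i.e. $+$ is associative), then: (a) $(X,+,q(0))$ and $(B,+,0)$ are monoids; (b) $A$ is in bijection with $\{(x,b)\in X\times B\mid \rho_b(x)=x\}$ via the mutually inverse assignments $a\mapsto(q(a),p(a))$ and $(x,b)\mapsto k(x)+s(b)$; (c) $\varphi(x,b,x',b')=\rho_{b+b'}(x+\xi(b,x'))$ for all $x,x'\in X$, $b,b'\in B$; (d) every retraction point of the form $(B,k',q',s',p')$ (from any set $Y$ to any unitary magma $C$) is composable with $(A,k,q,s,p)$. 2. If $A=(A,+,0)$ is a left loop, then: (a) $k(q(a))=a-s(p(a))$ for all $a\in A$; (b) $k(\varphi(x,b,x',b'))=\big((k(x)+s(b))+(k(x')+s(b'))\big)-s(b+b')$ for all $x,x'\in X$, $b,b'\in B$; (c) $\rho_b(x)=x$ for all $x\in X$, $b\in B$; (d) $k(\xi(b,x'))=(s(b)+k(x'))-s(b)$ for all $x'\in X$, $b\in B$; (e) $A$ is in bijection with $X\times B$ via the mutually inverse assignments $a\mapsto(q(a),p(a))$ and $(x,b)\mapsto k(x)+s(b)$.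
   Context: A unitary magma is a set with a binary operation $+$ and an element $0$ with $b+0=b=0+b$ for all $b$; morphisms preserve $+$ and $0$. Given a set $X$ and a unitary magma $B$, a retraction point from $X$ to $B$ is a tuple $(A,k,q,s,p)$ where $A=(A,+,0)$ is a unitary magma, $k\colon X\to A$ and $q\colon A\to X$ are maps, $s\colon B\to A$ and $p\colon A\to B$ are morphisms of unitary magmas, and $p(s(b))=b$, $q(k(x))=x$, $p(k(x))=0$, $q(s(b))=q(0)$, and $k(q(a))+s(p(a))=a$ for all $x\in X$, $b\in B$, $a\in A$. Composability: for a retraction point $(A,k,q,s,p)$ from $X$ to $B$ and a retraction point $(B,k',q',s',p')$ from a set $Y$ to a unitary magma $C$, let $A\times_B Y=\{(a,y)\in A\times Y\mid p(a)=k'(y)\}$ with first projection $\pi_1$, and $q''\colon A\to A\times_B Y$, $q''(a)=\big(k(q(a))+s(k'(q'(p(a)))),\ q'(p(a))\big)$; $(B,k',q',s',p')$ is composable with $(A,k,q,s,p)$ if $(A,\pi_1,q'',ss',p'p)$ is a retraction point from the set $A\times_B Y$ to $C$. A left loop is a unitary magma $(A,+,0)$ such that for all $a,c\in A$ there is a unique $u\in A$ with $a=u+c$; this $u$ is denoted $a-c$. *)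

theory Defs
  imports "HOL-Library.FuncSet"
begin

definition unitary_magma :: "'a set \<Rightarrow> ('a \<Rightarrow> 'a \<Rightarrow> 'a) \<Rightarrow> 'a \<Rightarrow> bool" where
  "unitary_magma M f z \<longleftrightarrow> z \<in> M \<and> (\<forall>a\<in>M. \<forall>b\<in>M. f a b \<in> M)
     \<and> (\<forall>b\<in>M. f b z = b \<and> f z b = b)"

definition monoid_on :: "'a set \<Rightarrow> ('a \<Rightarrow> 'a \<Rightarrow> 'a) \<Rightarrow> 'a \<Rightarrow> bool" where
  "monoid_on M f z \<longleftrightarrow> unitary_magma M f z
     \<and> (\<forall>a\<in>M. \<forall>b\<in>M. \<forall>c\<in>M. f (f a b) c = f a (f b c))"

definition magma_hom :: "'a set \<Rightarrow> ('a \<Rightarrow> 'a \<Rightarrow> 'a) \<Rightarrow> 'a \<Rightarrow>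
    'b set \<Rightarrow> ('b \<Rightarrow> 'b \<Rightarrow> 'b) \<Rightarrow> 'b \<Rightarrow> ('a \<Rightarrow> 'b) \<Rightarrow> bool" where
  "magma_hom M f z N g w h \<longleftrightarrow> h \<in> M \<rightarrow> N \<and> h z = w
     \<and> (\<forall>a\<in>M. \<forall>b\<in>M. h (f a b) = g (h a) (h b))"

definition retraction_point ::
  "'x set \<Rightarrow> 'b set \<Rightarrow> ('b \<Rightarrow> 'b \<Rightarrow> 'b) \<Rightarrow> 'b \<Rightarrow>
   'a set \<Rightarrow> ('a \<Rightarrow> 'a \<Rightarrow> 'a) \<Rightarrow> 'a \<Rightarrow>
   ('x \<Rightarrow> 'a) \<Rightarrow> ('a \<Rightarrow> 'x) \<Rightarrow> ('b \<Rightarrow> 'a) \<Rightarrow> ('a \<Rightarrow> 'b) \<Rightarrow> bool" where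
  "retraction_point X B plusB zB A plusA zA k q s p \<longleftrightarrow>
     unitary_magma B plusB zB \<and> unitary_magma A plusA zA
     \<and> k \<in> X \<rightarrow> A \<and> q \<in> A \<rightarrow> X
     \<and> magma_hom B plusB zB A plusA zA s \<and> magma_hom A plusA zA B plusB zB p
     \<and> (\<forall>b\<in>B. p (s b) = b) \<and> (\<forall>x\<in>X. q (k x) = x) \<and> (\<forall>x\<in>X. p (k x) = zB)
     \<and> (\<forall>b\<in>B. q (s b) = q zA) \<and> (\<forall>a\<in>A. plusA (k (q a)) (s (p a)) = a)"

definition fibre_prod :: "'a set \<Rightarrow> ('a \<Rightarrow> 'b) \<Rightarrow> 'y set \<Rightarrow> ('y \<Rightarrow> 'b) \<Rightarrow> ('a \<times> 'y) set" where
  "fibre_prod A p Y k' = {(a, y). a \<in> A \<and> y \<in> Y \<and> p a = k' y}"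

definition composable ::
  "'x set \<Rightarrow> 'b set \<Rightarrow> ('b \<Rightarrow> 'b \<Rightarrow> 'b) \<Rightarrow> 'b \<Rightarrow>
   'a set \<Rightarrow> ('a \<Rightarrow> 'a \<Rightarrow> 'a) \<Rightarrow> 'a \<Rightarrow>
   ('x \<Rightarrow> 'a) \<Rightarrow> ('a \<Rightarrow> 'x) \<Rightarrow> ('b \<Rightarrow> 'a) \<Rightarrow> ('a \<Rightarrow> 'b) \<Rightarrow>
   'y set \<Rightarrow> 'c set \<Rightarrow> ('c \<Rightarrow> 'c \<Rightarrow> 'c) \<Rightarrow> 'c \<Rightarrow>
   ('y \<Rightarrow> 'b) \<Rightarrow> ('b \<Rightarrow> 'y) \<Rightarrow> ('c \<Rightarrow> 'b) \<Rightarrow> ('b \<Rightarrow> 'c) \<Rightarrow> bool" where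
  "composable X B plusB zB A plusA zA k q s p Y C plusC zC k' q' s' p' \<longleftrightarrow>
     retraction_point (fibre_prod A p Y k') C plusC zC A plusA zA
       fst
       (\<lambda>a. (plusA (k (q a)) (s (k' (q' (p a)))), q' (p a)))
       (s \<circ> s') (p' \<circ> p)"

definition left_loop :: "'a set \<Rightarrow> ('a \<Rightarrow> 'a \<Rightarrow> 'a) \<Rightarrow> 'a \<Rightarrow> bool" where
  "left_loop M f z \<longleftrightarrow> unitary_magma M f z \<and> (\<forall>a\<in>M. \<forall>c\<in>M. \<exists>!u. u \<in> M \<and> a = f u c)"

definition lsub :: "'a set \<Rightarrow> ('a \<Rightarrow> 'a \<Rightarrow> 'a) \<Rightarrow> 'a \<Rightarrow> 'a \<Rightarrow> 'a" where
  "lsub M f a c = (THE u. u \<in> M \<and> a = f u c)"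

definition phi :: "('a \<Rightarrow> 'a \<Rightarrow> 'a) \<Rightarrow> ('x \<Rightarrow> 'a) \<Rightarrow> ('a \<Rightarrow> 'x) \<Rightarrow> ('b \<Rightarrow> 'a)
    \<Rightarrow> 'x \<Rightarrow> 'b \<Rightarrow> 'x \<Rightarrow> 'b \<Rightarrow> 'x" where
  "phi plusA k q s x b x' b' = q (plusA (plusA (k x) (s b)) (plusA (k x') (s b')))"

definition xplus :: "('a \<Rightarrow> 'a \<Rightarrow> 'a) \<Rightarrow> 'a \<Rightarrow> ('x \<Rightarrow> 'a) \<Rightarrow> ('a \<Rightarrow> 'x) \<Rightarrow> ('b \<Rightarrow> 'a) \<Rightarrow> 'b
    \<Rightarrow> 'x \<Rightarrow> 'x \<Rightarrow> 'x" where
  "xplus plusA zA k q s zB x x' = phi plusA k q s x zB x' zB"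

definition xi :: "('a \<Rightarrow> 'a \<Rightarrow> 'a) \<Rightarrow> 'a \<Rightarrow> ('x \<Rightarrow> 'a) \<Rightarrow> ('a \<Rightarrow> 'x) \<Rightarrow> ('b \<Rightarrow> 'a) \<Rightarrow> 'b
    \<Rightarrow> 'b \<Rightarrow> 'x \<Rightarrow> 'x" where
  "xi plusA zA k q s zB b x' = phi plusA k q s (q zA) b x' zB"

definition rho :: "('a \<Rightarrow> 'a \<Rightarrow> 'a) \<Rightarrow> 'a \<Rightarrow> ('x \<Rightarrow> 'a) \<Rightarrow> ('a \<Rightarrow> 'x) \<Rightarrow> ('b \<Rightarrow> 'a) \<Rightarrow> 'b
    \<Rightarrow> 'b \<Rightarrow> 'x \<Rightarrow> 'x" where
  "rho plusA zA k q s zB b' x = phi plusA k q s x zB (q zA) b'"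

end

theory Submission
  imports Defs
begin

theorem proposition6p2:
  fixes X :: "'x set" and B :: "'b set" and plusB :: "'b \<Rightarrow> 'b \<Rightarrow> 'b" and zB :: 'b
    and A :: "'a set" and plusA :: "'a \<Rightarrow> 'a \<Rightarrow> 'a" and zA :: 'a
    and k :: "'x \<Rightarrow> 'a" and q :: "'a \<Rightarrow> 'x" and s :: "'b \<Rightarrow> 'a" and p :: "'a \<Rightarrow> 'b"
  assumes rp: "retraction_point X B plusB zB A plusA zA k q s p"
  defines "S \<equiv> {(x, b). x \<in> X \<and> b \<in> B \<and> rho plusA zA k q s zB b x = x}"
  shows
   "(monoid_on A plusA zA \<longrightarrow>
      monoid_on X (xplus plusA zA k q s zB) (q zA)
      \<and> monoid_on B plusB zB
      \<and> bij_betw (\<lambda>a. (q a, p a)) A S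
      \<and> (\<forall>a\<in>A. (q a, p a) \<in> S \<and> plusA (k (q a)) (s (p a)) = a)
      \<and> (\<forall>(x, b)\<in>S. plusA (k x) (s b) \<in> A \<and> (q (plusA (k x) (s b)), p (plusA (k x) (s b))) = (x, b))
      \<and> (\<forall>x\<in>X. \<forall>b\<in>B. \<forall>x'\<in>X. \<forall>b'\<in>B.
           phi plusA k q s x b x' b'
           = rho plusA zA k q s zB (plusB b b')
               (xplus plusA zA k q s zB x (xi plusA zA k q s zB b x')))
      \<and> (\<forall>(Y :: 'y set) (C :: 'c set) plusC zC k' q' s' p'.
           retraction_point Y C plusC zC B plusB zB k' q' s' p' \<longrightarrow>
           composable X B plusB zB A plusA zA k q s p Y C plusC zC k' q' s' p'))
    \<and>
    (left_loop A plusA zA \<longrightarrow>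
      (\<forall>a\<in>A. k (q a) = lsub A plusA a (s (p a)))
      \<and> (\<forall>x\<in>X. \<forall>b\<in>B. \<forall>x'\<in>X. \<forall>b'\<in>B.
           k (phi plusA k q s x b x' b')
           = lsub A plusA (plusA (plusA (k x) (s b)) (plusA (k x') (s b'))) (s (plusB b b')))
      \<and> (\<forall>x\<in>X. \<forall>b\<in>B. rho plusA zA k q s zB b x = x)
      \<and> (\<forall>x'\<in>X. \<forall>b\<in>B. k (xi plusA zA k q s zB b x') = lsub A plusA (plusA (s b) (k x')) (s b))
      \<and> bij_betw (\<lambda>a. (q a, p a)) A (X \<times> B)
      \<and> (\<forall>a\<in>A. plusA (k (q a)) (s (p a)) = a)
      \<and> (\<forall>x\<in>X. \<forall>b\<in>B. plusA (k x) (s b) \<in> A \<and> (q (plusA (k x) (s b)), p (plusA (k x) (s b))) = (x, b)))"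
  proof -
  have uB: "unitary_magma B plusB zB" and uA: "unitary_magma A plusA zA"
    and kX: "k \<in> X \<rightarrow> A" and qA: "q \<in> A \<rightarrow> X"
    and sh: "magma_hom B plusB zB A plusA zA s" and ph: "magma_hom A plusA zA B plusB zB p"
    and ps: "\<And>b. b \<in> B \<Longrightarrow> p (s b) = b" and qk: "\<And>x. x \<in> X \<Longrightarrow> q (k x) = x"
    and pk: "\<And>x. x \<in> X \<Longrightarrow> p (k x) = zB" and qs: "\<And>b. b \<in> B \<Longrightarrow> q (s b) = q zA"
    and kqsp: "\<And>a. a \<in> A \<Longrightarrow> plusA (k (q a)) (s (p a)) = a"
    using rp unfolding retraction_point_def by auto
  have zB: "zB \<in> B" and clB: "\<And>a b. a \<in> B \<Longrightarrow> b \<in> B \<Longrightarrow> plusB a b \<in> B"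
    and uBr: "\<And>b. b \<in> B \<Longrightarrow> plusB b zB = b" and uBl: "\<And>b. b \<in> B \<Longrightarrow> plusB zB b = b"
    using uB unfolding unitary_magma_def by auto
  have zA: "zA \<in> A" and clA: "\<And>a b. a \<in> A \<Longrightarrow> b \<in> A \<Longrightarrow> plusA a b \<in> A"
    and uAr: "\<And>b. b \<in> A \<Longrightarrow> plusA b zA = b" and uAl: "\<And>b. b \<in> A \<Longrightarrow> plusA zA b = b"
    using uA unfolding unitary_magma_def by auto
  have kA: "\<And>x. x \<in> X \<Longrightarrow> k x \<in> A" using kX by auto
  have qX: "\<And>a. a \<in> A \<Longrightarrow> q a \<in> X" using qA by auto
  have sA: "\<And>b. b \<in> B \<Longrightarrow> s b \<in> A" and s0: "s zB = zA"
    and sp: "\<And>a b. a \<in> B \<Longrightarrow> b \<in> B \<Longrightarrow> s (plusB a b) = plusA (s a) (s b)"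
    using sh unfolding magma_hom_def by auto
  have pB: "\<And>a. a \<in> A \<Longrightarrow> p a \<in> B" and p0: "p zA = zB"
    and pp: "\<And>a b. a \<in> A \<Longrightarrow> b \<in> A \<Longrightarrow> p (plusA a b) = plusB (p a) (p b)"
    using ph unfolding magma_hom_def by auto
  have q0X: "q zA \<in> X" using qX zA by auto
  have kq0: "k (q zA) = zA"
    using kqsp[OF zA] p0 s0 uAr[OF kA[OF q0X]] by simp
  have rho_eq: "rho plusA zA k q s zB b x = q (plusA (k x) (s b))" if "x \<in> X" "b \<in> B" for x b
    unfolding rho_def phi_def using that by (simp add: s0 kq0 uAr uAl kA sA)
  have xi_eq: "xi plusA zA k q s zB b x = q (plusA (s b) (k x))" if "x \<in> X" "b \<in> B" for x b
    unfolding xi_def phi_def using that by (simp add: s0 kq0 uAr uAl kA sA)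
  have xplus_eq: "xplus plusA zA k q s zB x y = q (plusA (k x) (k y))" if "x \<in> X" "y \<in> X" for x y
    unfolding xplus_def phi_def using that by (simp add: s0 uAr kA)
  have pks: "p (plusA (k x) (s b)) = b" if "x \<in> X" "b \<in> B" for x b
    using that by (simp add: pp kA sA pk ps uBl)
  have S_eq: "S = {(x, b). x \<in> X \<and> b \<in> B \<and> q (plusA (k x) (s b)) = x}"
    unfolding S_def using rho_eq by auto
  have part1: "monoid_on X (xplus plusA zA k q s zB) (q zA)
      \<and> monoid_on B plusB zB
      \<and> bij_betw (\<lambda>a. (q a, p a)) A S
      \<and> (\<forall>a\<in>A. (q a, p a) \<in> S \<and> plusA (k (q a)) (s (p a)) = a)
      \<and> (\<forall>(x, b)\<in>S. plusA (k x) (s b) \<in> A \<and> (q (plusA (k x) (s b)), p (plusA (k x) (s b))) = (x, b))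
      \<and> (\<forall>x\<in>X. \<forall>b\<in>B. \<forall>x'\<in>X. \<forall>b'\<in>B.
           phi plusA k q s x b x' b'
           = rho plusA zA k q s zB (plusB b b')
               (xplus plusA zA k q s zB x (xi plusA zA k q s zB b x')))
      \<and> (\<forall>(Y :: 'y set) (C :: 'c set) plusC zC k' q' s' p'.
           retraction_point Y C plusC zC B plusB zB k' q' s' p' \<longrightarrow>
           composable X B plusB zB A plusA zA k q s p Y C plusC zC k' q' s' p')"
    if mon: "monoid_on A plusA zA"
  proof -
    have asA: "\<And>a b c. a \<in> A \<Longrightarrow> b \<in> A \<Longrightarrow> c \<in> A \<Longrightarrow> plusA (plusA a b) c = plusA a (plusA b c)"
      using mon unfolding monoid_on_def by auto
    have kq_p0: "k (q a) = a" if "a \<in> A" "p a = zB" for a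
      using kqsp[OF that(1)] that s0 uAr kA qX by metis
    have kqkk: "k (q (plusA (k x) (k y))) = plusA (k x) (k y)" if "x \<in> X" "y \<in> X" for x y
      using that by (intro kq_p0) (simp_all add: clA kA pp pk uBl zB)
    have m1: "monoid_on X (xplus plusA zA k q s zB) (q zA)"
      unfolding monoid_on_def unitary_magma_def
    proof (intro conjI ballI)
      fix a b c assume h: "a \<in> X" "b \<in> X" "c \<in> X"
      show "xplus plusA zA k q s zB (xplus plusA zA k q s zB a b) c =
            xplus plusA zA k q s zB a (xplus plusA zA k q s zB b c)"
        using h by (simp add: xplus_eq qX clA kA kqkk asA)
    qed (auto simp: q0X xplus_eq qX clA kA kq0 uAr uAl qk)
    have m2: "monoid_on B plusB zB"
      unfolding monoid_on_def
    proof (intro conjI ballI uB)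
      fix a b c assume h: "a \<in> B" "b \<in> B" "c \<in> B"
      have "plusB (plusB a b) c = p (s (plusB (plusB a b) c))" using h by (simp add: ps clB)
      also have "\<dots> = p (plusA (plusA (s a) (s b)) (s c))" using h by (simp add: sp clB)
      also have "\<dots> = p (plusA (s a) (plusA (s b) (s c)))" using h by (simp add: asA sA)
      also have "\<dots> = p (s (plusB a (plusB b c)))" using h by (simp add: sp clB)
      also have "\<dots> = plusB a (plusB b c)" using h by (simp add: ps clB)
      finally show "plusB (plusB a b) c = plusB a (plusB b c)" .
    qed
    have m3: "\<forall>a\<in>A. (q a, p a) \<in> S \<and> plusA (k (q a)) (s (p a)) = a"
      using kqsp qX pB by (simp add: S_eq)
    have m4: "\<forall>(x, b)\<in>S. plusA (k x) (s b) \<in> A \<and> (q (plusA (k x) (s b)), p (plusA (k x) (s b))) = (x, b)"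
      by (auto simp: S_eq clA kA sA pks)
    have m5: "bij_betw (\<lambda>a. (q a, p a)) A S"
    proof (rule bij_betw_byWitness[where f' = "\<lambda>(x, b). plusA (k x) (s b)"])
      show "\<forall>a\<in>A. (\<lambda>(x, b). plusA (k x) (s b)) (q a, p a) = a" using kqsp by simp
      show "\<forall>a'\<in>S. (q (case a' of (x, b) \<Rightarrow> plusA (k x) (s b)), p (case a' of (x, b) \<Rightarrow> plusA (k x) (s b))) = a'"
        using m4 by auto
      show "(\<lambda>a. (q a, p a)) ` A \<subseteq> S" using m3 by auto
      show "(\<lambda>(x, b). plusA (k x) (s b)) ` S \<subseteq> A" using m4 by auto
    qed
    have m6: "phi plusA k q s x b x' b'
           = rho plusA zA k q s zB (plusB b b')
               (xplus plusA zA k q s zB x (xi plusA zA k q s zB b x'))"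
      if h: "x \<in> X" "b \<in> B" "x' \<in> X" "b' \<in> B" for x b x' b'
    proof -
      define a1 where "a1 = plusA (s b) (k x')"
      have a1A: "a1 \<in> A" using h by (simp add: a1_def clA sA kA)
      have pa1: "p a1 = b" using h by (simp add: a1_def pp sA kA ps pk uBr)
      have a1e: "plusA (k (q a1)) (s b) = a1" using kqsp[OF a1A] pa1 by simp
      have y: "xplus plusA zA k q s zB x (xi plusA zA k q s zB b x') = q (plusA (k x) (k (q a1)))"
        using h by (simp add: xi_eq xplus_eq a1_def[symmetric] qX a1A)
      have yX: "q (plusA (k x) (k (q a1))) \<in> X" using h a1A by (simp add: qX clA kA)
      have ky: "k (q (plusA (k x) (k (q a1)))) = plusA (k x) (k (q a1))"
        using h a1A by (simp add: kqkk qX)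
      have "rho plusA zA k q s zB (plusB b b') (q (plusA (k x) (k (q a1))))
          = q (plusA (plusA (k x) (k (q a1))) (s (plusB b b')))"
        using rho_eq[OF yX clB[OF h(2) h(4)]] ky by simp
      also have "\<dots> = q (plusA (plusA (k x) (s b)) (plusA (k x') (s b')))"
      proof -
        have "plusA (plusA (k x) (k (q a1))) (s (plusB b b'))
            = plusA (k x) (plusA (plusA (k (q a1)) (s b)) (s b'))"
          using h a1A by (simp add: sp asA kA qX sA clA)
        also have "\<dots> = plusA (k x) (plusA a1 (s b'))" using a1e by simp
        also have "\<dots> = plusA (plusA (k x) (s b)) (plusA (k x') (s b'))"
          using h by (simp add: a1_def asA kA sA clA)
        finally show ?thesis by simp
      qed
      finally show ?thesis using y unfolding phi_def by simp
    qed
    have m7: "composable X B plusB zB A plusA zA k q s p Y C plusC zC k' q' s' p'"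
      if rp2: "retraction_point Y C plusC zC B plusB zB k' q' s' p'"
      for Y :: "'y set" and C :: "'c set" and plusC zC k' q' s' p'
    proof -
      have uC: "unitary_magma C plusC zC"
        and k'X: "k' \<in> Y \<rightarrow> B" and q'A: "q' \<in> B \<rightarrow> Y"
        and sh': "magma_hom C plusC zC B plusB zB s'" and ph': "magma_hom B plusB zB C plusC zC p'"
        and ps': "\<And>b. b \<in> C \<Longrightarrow> p' (s' b) = b" and qk': "\<And>x. x \<in> Y \<Longrightarrow> q' (k' x) = x"
        and pk': "\<And>x. x \<in> Y \<Longrightarrow> p' (k' x) = zC" and qs': "\<And>b. b \<in> C \<Longrightarrow> q' (s' b) = q' zB"
        and kqsp': "\<And>a. a \<in> B \<Longrightarrow> plusB (k' (q' a)) (s' (p' a)) = a"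
        using rp2 unfolding retraction_point_def by auto
      have k'B: "\<And>y. y \<in> Y \<Longrightarrow> k' y \<in> B" using k'X by auto
      have q'Y: "\<And>b. b \<in> B \<Longrightarrow> q' b \<in> Y" using q'A by auto
      have sB': "\<And>c. c \<in> C \<Longrightarrow> s' c \<in> B" and s0': "s' zC = zB"
        and sp': "\<And>a b. a \<in> C \<Longrightarrow> b \<in> C \<Longrightarrow> s' (plusC a b) = plusB (s' a) (s' b)"
        using sh' unfolding magma_hom_def by auto
      have pC': "\<And>a. a \<in> B \<Longrightarrow> p' a \<in> C" and p0': "p' zB = zC"
        and pp': "\<And>a b. a \<in> B \<Longrightarrow> b \<in> B \<Longrightarrow> p' (plusB a b) = plusC (p' a) (p' b)"
        using ph' unfolding magma_hom_def by auto
      show ?thesis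
        unfolding composable_def retraction_point_def
      proof (intro conjI)
        show "unitary_magma C plusC zC" by (rule uC)
        show "unitary_magma A plusA zA" by (rule uA)
        show "fst \<in> fibre_prod A p Y k' \<rightarrow> A" by (auto simp: fibre_prod_def)
        show "(\<lambda>a. (plusA (k (q a)) (s (k' (q' (p a)))), q' (p a))) \<in> A \<rightarrow> fibre_prod A p Y k'"
          by (auto simp: fibre_prod_def clA kA qX sA k'B q'Y pB pp pk ps uBl)
        show "magma_hom C plusC zC A plusA zA (s \<circ> s')"
          unfolding magma_hom_def by (auto simp: sA sB' s0' s0 sp' sp)
        show "magma_hom A plusA zA C plusC zC (p' \<circ> p)"
          unfolding magma_hom_def by (auto simp: pC' pB p0' p0 pp' pp)
        show "\<forall>b\<in>C. (p' \<circ> p) ((s \<circ> s') b) = b" by (simp add: ps sB' ps')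
        show "\<forall>x\<in>fibre_prod A p Y k'. (\<lambda>a. (plusA (k (q a)) (s (k' (q' (p a)))), q' (p a))) (fst x) = x"
        proof
          fix x assume xP: "x \<in> fibre_prod A p Y k'"
          then obtain a y where xe: "x = (a, y)" and aA: "a \<in> A" and yY: "y \<in> Y" and pa: "p a = k' y"
            unfolding fibre_prod_def by auto
          have "plusA (k (q a)) (s (k' y)) = a" using kqsp[OF aA] pa by simp
          then show "(\<lambda>a. (plusA (k (q a)) (s (k' (q' (p a)))), q' (p a))) (fst x) = x"
            using xe pa qk'[OF yY] by simp
        qed
        show "\<forall>x\<in>fibre_prod A p Y k'. (p' \<circ> p) (fst x) = zC"
          by (auto simp: fibre_prod_def pk')
        show "\<forall>b\<in>C. (\<lambda>a. (plusA (k (q a)) (s (k' (q' (p a)))), q' (p a))) ((s \<circ> s') b) =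
            (\<lambda>a. (plusA (k (q a)) (s (k' (q' (p a)))), q' (p a))) zA"
        proof
          fix c assume cC: "c \<in> C"
          have "p (s (s' c)) = s' c" using cC sB' ps by simp
          moreover have "q' (s' c) = q' zB" using cC qs' by simp
          moreover have "q (s (s' c)) = q zA" using cC sB' qs by simp
          ultimately show "(\<lambda>a. (plusA (k (q a)) (s (k' (q' (p a)))), q' (p a))) ((s \<circ> s') c) =
            (\<lambda>a. (plusA (k (q a)) (s (k' (q' (p a)))), q' (p a))) zA"
            using p0 by simp
        qed
        show "\<forall>a\<in>A. plusA (fst ((\<lambda>a. (plusA (k (q a)) (s (k' (q' (p a)))), q' (p a))) a)) ((s \<circ> s') ((p' \<circ> p) a)) = a"
        proof
          fix a assume aA: "a \<in> A"
          have "plusA (plusA (k (q a)) (s (k' (q' (p a))))) (s (s' (p' (p a))))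
              = plusA (k (q a)) (s (plusB (k' (q' (p a))) (s' (p' (p a)))))"
            using aA by (simp add: asA kA qX sA k'B q'Y pB sB' pC' sp)
          also have "\<dots> = a" using aA by (simp add: kqsp' pB kqsp)
          finally show "plusA (fst ((\<lambda>a. (plusA (k (q a)) (s (k' (q' (p a)))), q' (p a))) a)) ((s \<circ> s') ((p' \<circ> p) a)) = a"
            by simp
        qed
      qed
    qed
    have m6': "\<forall>x\<in>X. \<forall>b\<in>B. \<forall>x'\<in>X. \<forall>b'\<in>B.
           phi plusA k q s x b x' b'
           = rho plusA zA k q s zB (plusB b b')
               (xplus plusA zA k q s zB x (xi plusA zA k q s zB b x'))"
      using m6 by simp
    show ?thesis by (intro conjI allI impI m1 m2 m3 m4 m5 m6' m7)
  qed
  have lsubI: "lsub A plusA a c = u" if ll: "left_loop A plusA zA" and h: "a \<in> A" "c \<in> A" "u \<in> A" "a = plusA u c" for a c u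
  proof -
    have "\<forall>a\<in>A. \<forall>c\<in>A. \<exists>!u. u \<in> A \<and> a = plusA u c"
      using ll unfolding left_loop_def by (rule conjunct2)
    then have eu: "\<exists>!u. u \<in> A \<and> a = plusA u c" using h(1,2) by simp
    have uu: "u \<in> A \<and> a = plusA u c" using h by simp
    show ?thesis unfolding lsub_def using the1_equality[OF eu uu] by simp
  qed
  have part2: "(\<forall>a\<in>A. k (q a) = lsub A plusA a (s (p a)))
      \<and> (\<forall>x\<in>X. \<forall>b\<in>B. \<forall>x'\<in>X. \<forall>b'\<in>B.
           k (phi plusA k q s x b x' b')
           = lsub A plusA (plusA (plusA (k x) (s b)) (plusA (k x') (s b'))) (s (plusB b b')))
      \<and> (\<forall>x\<in>X. \<forall>b\<in>B. rho plusA zA k q s zB b x = x)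
      \<and> (\<forall>x'\<in>X. \<forall>b\<in>B. k (xi plusA zA k q s zB b x') = lsub A plusA (plusA (s b) (k x')) (s b))
      \<and> bij_betw (\<lambda>a. (q a, p a)) A (X \<times> B)
      \<and> (\<forall>a\<in>A. plusA (k (q a)) (s (p a)) = a)
      \<and> (\<forall>x\<in>X. \<forall>b\<in>B. plusA (k x) (s b) \<in> A \<and> (q (plusA (k x) (s b)), p (plusA (k x) (s b))) = (x, b))"
    if ll: "left_loop A plusA zA"
  proof -
    have uniq: "u = v" if "a \<in> A" "c \<in> A" "u \<in> A" "v \<in> A" "a = plusA u c" "a = plusA v c" for a c u v
      using lsubI[OF ll that(1,2,3,5)] lsubI[OF ll that(1,2,4,6)] by simp
    have l1: "k (q a) = lsub A plusA a (s (p a))" if "a \<in> A" for a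
      using that by (intro lsubI[OF ll, symmetric]) (simp_all add: kqsp sA pB kA qX)
    have l2: "\<forall>x\<in>X. \<forall>b\<in>B. \<forall>x'\<in>X. \<forall>b'\<in>B.
           k (phi plusA k q s x b x' b')
           = lsub A plusA (plusA (plusA (k x) (s b)) (plusA (k x') (s b'))) (s (plusB b b'))"
      by (auto simp: phi_def l1 clA kA sA pp pk ps uBl)
    have qks: "q (plusA (k x) (s b)) = x" if h: "x \<in> X" "b \<in> B" for x b
    proof -
      have aA: "plusA (k x) (s b) \<in> A" using h by (simp add: clA kA sA)
      have "k (q (plusA (k x) (s b))) = k x"
      proof (rule uniq[OF aA sA[OF h(2)] kA[OF qX[OF aA]] kA[OF h(1)]])
        show "plusA (k x) (s b) = plusA (k (q (plusA (k x) (s b)))) (s b)"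
          using kqsp[OF aA] unfolding pks[OF h] by (rule sym)
      qed (rule refl)
      then have "q (k (q (plusA (k x) (s b)))) = q (k x)" by (rule arg_cong)
      then show ?thesis using qk h(1) qk[OF qX[OF aA]] by simp
    qed
    have l3: "\<forall>x\<in>X. \<forall>b\<in>B. rho plusA zA k q s zB b x = x" by (simp add: rho_eq qks)
    have l4: "\<forall>x'\<in>X. \<forall>b\<in>B. k (xi plusA zA k q s zB b x') = lsub A plusA (plusA (s b) (k x')) (s b)"
      by (auto simp: xi_eq l1 clA kA sA pp pk ps uBr)
    have l7: "\<forall>x\<in>X. \<forall>b\<in>B. plusA (k x) (s b) \<in> A \<and> (q (plusA (k x) (s b)), p (plusA (k x) (s b))) = (x, b)"
      by (simp add: clA kA sA qks pks)
    have l5: "bij_betw (\<lambda>a. (q a, p a)) A (X \<times> B)"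
    proof (rule bij_betw_byWitness[where f' = "\<lambda>(x, b). plusA (k x) (s b)"])
      show "\<forall>a\<in>A. (\<lambda>(x, b). plusA (k x) (s b)) (q a, p a) = a" using kqsp by simp
      show "\<forall>a'\<in>X \<times> B. (q (case a' of (x, b) \<Rightarrow> plusA (k x) (s b)), p (case a' of (x, b) \<Rightarrow> plusA (k x) (s b))) = a'"
        using l7 by auto
      show "(\<lambda>a. (q a, p a)) ` A \<subseteq> X \<times> B" using qX pB by auto
      show "(\<lambda>(x, b). plusA (k x) (s b)) ` (X \<times> B) \<subseteq> A" using l7 by auto
    qed
    have l1': "\<forall>a\<in>A. k (q a) = lsub A plusA a (s (p a))" using l1 by simp
    have l6: "\<forall>a\<in>A. plusA (k (q a)) (s (p a)) = a" using kqsp by simp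
    show ?thesis by (intro conjI l1' l2 l3 l4 l5 l6 l7)
  qed
  show ?thesis by (rule conjI[OF impI[OF part1] impI[OF part2]])
qed

end
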